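(* Let $r$ be a positive integer and $k,a\in\mathbb{K}$. Then $$\frac{d^{r+1}}{dx^{r+1}}\left[x^r\left(\frac{x}{x-a}\right)^k\right]=(-a)^{r+1}k^{(r+1)}\frac{x^{k-1}}{(x-a)^{k+r+1}}.$$
   Context: $\mathbb{K}\in\{\mathbb{Q},\mathbb{R},\mathbb{C}\}$. $k^{(n)}=k(k+1)\cdots(k+n-1)$ is the rising Pochhammer symbol. The identity is understood in formal Laurent series in $x^{-1}$: $\left(\frac{x}{x-a}\right)^k:=(1-a/x)^{-k}=\sum_{i\ge0}\binom{-k}{i}(-a/x)^i$ (binomial series), and $\frac{x^{k-1}}{(x-a)^{k+r+1}}:=x^{-r-2}(1-a/x)^{-k-r-1}$, with termwise differentiation. *)

theory Defs
  imports Complex_Main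
begin

text \<open>Formal Laurent series in x^(-1) are represented by their coefficient
  functions: f n is the coefficient of x^n (n an integer).\<close>

text \<open>Termwise derivative: the coefficient of x^n in f' is (n+1) times the
  coefficient of x^(n+1) in f.\<close>
definition ldiff :: "(int \<Rightarrow> 'a::field_char_0) \<Rightarrow> int \<Rightarrow> 'a" where
  "ldiff f = (\<lambda>n. of_int (n + 1) * f (n + 1))"

text \<open>binser a c m is the series x^m * (1 - a/x)^(-c)
  = sum over i of ((-c) gchoose i) * (-a)^i * x^(m-i).\<close>
definition binser :: "'a::field_char_0 \<Rightarrow> 'a \<Rightarrow> int \<Rightarrow> int \<Rightarrow> 'a" where
  "binser a c m = (\<lambda>n. if n \<le> m then ((- c) gchoose nat (m - n)) * (- a) ^ nat (m - n) else 0)"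

end

theory Submission
  imports Defs
begin

lemma ldiff_iter:
  "(ldiff ^^ m) f = (\<lambda>n. pochhammer (of_int (n + 1)) m * f (n + int m))"
proof (induction m)
  case 0 then show ?case by (simp add: pochhammer_0)
next
  case (Suc m)
  show ?case
  proof
    fix n
    have "(ldiff ^^ Suc m) f n = ldiff ((ldiff ^^ m) f) n" by simp
    also have "\<dots> = of_int (n+1) * (pochhammer (of_int (n + 1 + 1)) m * f (n + 1 + int m))"
      unfolding Suc.IH by (simp add: ldiff_def)
    also have "\<dots> = pochhammer (of_int (n + 1)) (Suc m) * f (n + int (Suc m))"
      by (simp add: pochhammer_rec add.assoc)
    finally show "(ldiff ^^ Suc m) f n = pochhammer (of_int (n + 1)) (Suc m) * f (n + int (Suc m))" .
  qed
qed

lemma key: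
  fixes k a :: "'a::field_char_0"
  shows "pochhammer (- of_nat (i + r + 1)) (r + 1) * ((- k gchoose (i + r + 1)) * (- a) ^ (i + r + 1))
     = (- a) ^ (r + 1) * pochhammer k (r + 1) * ((- (k + of_nat r + 1) gchoose i) * (- a) ^ i)"
proof -
  define j where "j = i + r + 1"
  have p1: "pochhammer (- of_nat j) (r + 1) = (-1) ^ (r+1) * pochhammer (of_nat i + 1 :: 'a) (r + 1)"
    apply (subst pochhammer_minus)
    apply (simp add: j_def algebra_simps)
    done
  have f: "fact j = (fact i :: 'a) * pochhammer (of_nat i + 1) (r + 1)"
    using pochhammer_product[of i j "1::'a"] by (simp add: pochhammer_fact j_def add.commute)
  have pk: "pochhammer k j = pochhammer k (r+1) * pochhammer (k + of_nat r + 1) i"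
    using pochhammer_product[of "r+1" j k] by (simp add: j_def ac_simps)
  have fi: "(fact i :: 'a) \<noteq> 0" by simp
  have P0: "pochhammer (of_nat i + 1 :: 'a) (r + 1) \<noteq> 0"
  proof
    assume "pochhammer (of_nat i + 1 :: 'a) (r + 1) = 0"
    then have "(fact j :: 'a) = 0" by (simp add: f)
    then show False by simp
  qed
  have "pochhammer (- of_nat j) (r + 1) * ((- k gchoose j) * (- a) ^ j)
      = (-1)^(r+1) * pochhammer (of_nat i + 1) (r + 1) * ((-1)^j * pochhammer k j / fact j) * (-a)^j"
    unfolding p1 by (simp add: gbinomial_pochhammer)
  also have "\<dots> = (-1)^(r+1) * (-1)^j * pochhammer k j / fact i * (-a)^j"
    using fi P0 by (simp add: f field_simps)
  also have "\<dots> = (- a) ^ (r + 1) * pochhammer k (r + 1) * (((-1)^i * pochhammer (k + of_nat r + 1) i / fact i) * (- a) ^ i)"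
    unfolding pk by (simp add: j_def power_add field_simps)
  also have "\<dots> = (- a) ^ (r + 1) * pochhammer k (r + 1) * ((- (k + of_nat r + 1) gchoose i) * (- a) ^ i)"
    by (simp add: gbinomial_pochhammer algebra_simps)
  finally show ?thesis by (simp add: j_def)
qed

theorem lemma4p5:
  fixes k a :: "'a::field_char_0" and r :: nat
  assumes "r > 0"
  shows "(ldiff ^^ (r + 1)) (binser a k (int r))
       = (\<lambda>n. (- a) ^ (r + 1) * pochhammer k (r + 1)
                * binser a (k + of_nat r + 1) (- int r - 2) n)"
proof
  fix n :: int
  show "(ldiff ^^ (r + 1)) (binser a k (int r)) n
       = (- a) ^ (r + 1) * pochhammer k (r + 1) * binser a (k + of_nat r + 1) (- int r - 2) n"
  proof (cases "n \<le> - int r - 2")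
    case True
    define i where "i = nat (- int r - 2 - n)"
    have n: "n = - int (i + r + 1) - 1" using True by (simp add: i_def)
    have e1: "nat (int r - (n + int (r + 1))) = i + r + 1" using n by simp
    have e2: "nat (- int r - 2 - n) = i" by (simp add: i_def)
    have e3: "(of_int (n + 1) :: 'a) = - of_nat (i + r + 1)" using n by simp
    show ?thesis unfolding ldiff_iter binser_def using True
      apply (simp only: e1 e2 e3 if_True)
      using key[of i r k a] n by simp
  next
    case False
    have rhs: "binser a (k + of_nat r + 1) (- int r - 2) n = 0" using False by (simp add: binser_def)
    show ?thesis
    proof (cases "n \<ge> 0")
      case True
      then show ?thesis unfolding ldiff_iter by (simp add: binser_def rhs)
    next
      case F2: False
      have "pochhammer (of_int (n + 1) :: 'a) (r + 1) = 0"
        unfolding pochhammer_eq_0_iff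
        by (rule exI[of _ "nat (- (n+1))"]) (use F2 False in auto)
      then show ?thesis unfolding ldiff_iter by (simp add: rhs)
    qed
  qed
qed

end
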